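(* Let $A,B,C$ be distinct letters in an $\alpha$-alphabet $\mathcal A$ and let $x,y,z,t$ be words in the alphabet $\mathcal A\setminus\{A,B,C\}$ such that $xyzt$ is a Gauss word in this alphabet. Then (i) $(\mathcal A,xAByCAzBCt)\simeq_S(\mathcal A,xBAyACzCBt)$ if $(|A|,\tau(|B|),|C|)\in S$; (ii) $(\mathcal A,xAByCAzCBt)\simeq_S(\mathcal A,xBAyACzBCt)$ if $(\tau(|A|),\tau(|B|),|C|)\in S$; (iii) $(\mathcal A,xAByACzCBt)\simeq_S(\mathcal A,xBAyCAzBCt)$ if $(|A|,\tau(|B|),\tau(|C|))\in S$.
   Context: Fix a set $\alpha$ with an involution $\tau$ and an arbitrary subset $S\subset\alpha\times\alpha\times\alpha$. An $\alpha$-alphabet is a set $\mathcal A$ with a map $A\mapsto|A|\in\alpha$. A Gauss word in a finite alphabet is a word in which each letter of the alphabet occurs exactly twice. A nanoword over $\alpha$ is a pair $(\mathcal A,w)$ with $\mathcal A$ a finite $\alpha$-alphabet and $w$ a Gauss word in $\mathcal A$. Nanowords are isomorphic if a bijection of alphabets preserving $|\cdot|$ carries one word letterwise to the other. $S$-homotopy moves ($x,y,z,t$ words in the remaining letters; smaller alphabets carry the restricted projection): (1) $(\mathcal A,xAAy)\mapsto(\mathcal A\setminus\{A\},xy)$; (2) $(\mathcal A,xAByBAz)\mapsto(\mathcal A\setminus\{A,B\},xyz)$ if $|B|=\tau(|A|)$; (3) $(\mathcal A,xAByACzBCt)\mapsto(\mathcal A,xBAyCAzCBt)$ if $A,B,C$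 are distinct and $(|A|,|B|,|C|)\in S$. $S$-homotopy $\simeq_S$ is the equivalence relation generated by isomorphisms, these moves and their inverses. *)

theory Defs
  imports Main
begin

text \<open>A nanoword over alpha (type 'a) with letters of type 'l is a triple
  (alphabet, projection, word): the alphabet is a finite set of letters, the
  projection gives each letter its value |.| in alpha (only its values on the
  alphabet matter), and the word is a Gauss word in the alphabet.\<close>

type_synonym ('l, 'a) nanoword = "'l set \<times> ('l \<Rightarrow> 'a) \<times> 'l list"

definition gauss_word :: "'l set \<Rightarrow> 'l list \<Rightarrow> bool" where
  "gauss_word Al w \<longleftrightarrow> set w \<subseteq> Al \<and> (\<forall>a\<in>Al. count_list w a = 2)"

definition is_nanoword :: "('l, 'a) nanoword \<Rightarrow> bool" where
  "is_nanoword n \<longleftrightarrow> (case n of (Al, p, w) \<Rightarrow> finite Al \<and> gauss_word Al w)"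

definition nano_iso :: "('l, 'a) nanoword \<Rightarrow> ('l, 'a) nanoword \<Rightarrow> bool" where
  "nano_iso n1 n2 \<longleftrightarrow> (case n1 of (Al1, p1, w1) \<Rightarrow> case n2 of (Al2, p2, w2) \<Rightarrow>
     is_nanoword n1 \<and> is_nanoword n2 \<and>
     (\<exists>f. bij_betw f Al1 Al2 \<and> (\<forall>a\<in>Al1. p2 (f a) = p1 a) \<and> map f w1 = w2))"

inductive nano_move :: "('a \<times> 'a \<times> 'a) set \<Rightarrow> ('a \<Rightarrow> 'a) \<Rightarrow>
    ('l, 'a) nanoword \<Rightarrow> ('l, 'a) nanoword \<Rightarrow> bool"
  for S :: "('a \<times> 'a \<times> 'a) set" and \<tau> :: "'a \<Rightarrow> 'a" where
  move1: "is_nanoword (Al, p, x @ [a, a] @ y) \<Longrightarrow>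
          nano_move S \<tau> (Al, p, x @ [a, a] @ y) (Al - {a}, p, x @ y)"
| move2: "is_nanoword (Al, p, x @ [a, b] @ y @ [b, a] @ z) \<Longrightarrow> p b = \<tau> (p a) \<Longrightarrow>
          nano_move S \<tau> (Al, p, x @ [a, b] @ y @ [b, a] @ z) (Al - {a, b}, p, x @ y @ z)"
| move3: "is_nanoword (Al, p, x @ [a, b] @ y @ [a, c] @ z @ [b, c] @ t) \<Longrightarrow>
          a \<noteq> b \<Longrightarrow> a \<noteq> c \<Longrightarrow> b \<noteq> c \<Longrightarrow> (p a, p b, p c) \<in> S \<Longrightarrow>
          nano_move S \<tau> (Al, p, x @ [a, b] @ y @ [a, c] @ z @ [b, c] @ t)
                         (Al, p, x @ [b, a] @ y @ [c, a] @ z @ [c, b] @ t)"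

definition nano_homotopic :: "('a \<times> 'a \<times> 'a) set \<Rightarrow> ('a \<Rightarrow> 'a) \<Rightarrow>
    ('l, 'a) nanoword \<Rightarrow> ('l, 'a) nanoword \<Rightarrow> bool" where
  "nano_homotopic S \<tau> = (\<lambda>u v. nano_iso u v \<or> nano_move S \<tau> u v \<or> nano_move S \<tau> v u)\<^sup>*\<^sup>*"

end

theory Submission
  imports Defs
begin


lemma hom_refl: "nano_homotopic S \<tau> u u"
  unfolding nano_homotopic_def by simp

lemma hom_trans: "nano_homotopic S \<tau> u v \<Longrightarrow> nano_homotopic S \<tau> v w \<Longrightarrow> nano_homotopic S \<tau> u w"
  unfolding nano_homotopic_def by (rule rtranclp_trans)

lemma iso_sym: "nano_iso u v \<Longrightarrow> nano_iso v u"
proof -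
  assume h: "nano_iso u v"
  obtain Al1 p1 w1 where u: "u = (Al1,p1,w1)" by (cases u) auto
  obtain Al2 p2 w2 where v: "v = (Al2,p2,w2)" by (cases v) auto
  from h obtain f where f: "bij_betw f Al1 Al2" "\<forall>a\<in>Al1. p2 (f a) = p1 a" "map f w1 = w2"
    and n: "is_nanoword u" "is_nanoword v"
    unfolding nano_iso_def u v by auto
  have sw: "set w1 \<subseteq> Al1" using n(1) unfolding u is_nanoword_def gauss_word_def by auto
  let ?g = "the_inv_into Al1 f"
  have "bij_betw ?g Al2 Al1" using f(1) by (rule bij_betw_the_inv_into)
  moreover have "\<forall>a\<in>Al2. p1 (?g a) = p2 a"
    using f(1,2) by (metis bij_betw_def f_the_inv_into_f_bij_betw the_inv_into_into order_refl)
  moreover have "map ?g w2 = w1"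
  proof -
    have "map ?g w2 = map (?g \<circ> f) w1" using f(3) by auto
    also have "\<dots> = w1"
      using sw f(1) by (intro map_idI) (auto simp: bij_betw_def the_inv_into_f_f)
    finally show ?thesis .
  qed
  ultimately show ?thesis using n unfolding nano_iso_def u v by auto
qed

lemma hom_sym: "nano_homotopic S \<tau> u v \<Longrightarrow> nano_homotopic S \<tau> v u"
  unfolding nano_homotopic_def
proof (induction rule: rtranclp_induct)
  case base then show ?case by simp
next
  case (step y z)
  then have "(\<lambda>u v. nano_iso u v \<or> nano_move S \<tau> u v \<or> nano_move S \<tau> v u) z y"
    using iso_sym by blast
  then show ?case using step(3) by (rule converse_rtranclp_into_rtranclp)
qed

lemma hom_move: "nano_move S \<tau> u v \<Longrightarrow> nano_homotopic S \<tau> u v"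
  unfolding nano_homotopic_def by auto
lemma hom_move_inv: "nano_move S \<tau> v u \<Longrightarrow> nano_homotopic S \<tau> u v"
  unfolding nano_homotopic_def by auto
lemma hom_iso: "nano_iso u v \<Longrightarrow> nano_homotopic S \<tau> u v"
  unfolding nano_homotopic_def by auto

lemma iso_proj:
  assumes "is_nanoword (Al,p,w)" "\<forall>u\<in>Al. p' u = p u"
  shows "nano_iso (Al,p,w) (Al,p',w)"
  using assms unfolding nano_iso_def is_nanoword_def
  by (auto intro!: exI[of _ id])

lemma iso_rename:
  assumes "is_nanoword (Al',p',W)" "is_nanoword (Al,p,W')"
    "D \<notin> Al" "b \<in> Al" "Al' = insert D (Al - {b})"
    "\<forall>u\<in>Al-{b}. p' u = p u" "p' D = p b"
    "map (\<lambda>u. if u = D then b else u) W = W'"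
  shows "nano_iso (Al',p',W) (Al,p,W')"
proof -
  have "bij_betw (\<lambda>u. if u = D then b else u) Al' Al"
    using assms(3,4,5) unfolding bij_betw_def inj_on_def by auto
  moreover have "\<forall>a\<in>Al'. p ((\<lambda>u. if u = D then b else u) a) = p' a"
    using assms(3-7) by auto
  ultimately show ?thesis using assms(1,2,8) unfolding nano_iso_def by blast
qed

lemma nw_intro:
  assumes "finite Al" "set W \<subseteq> Al" "\<And>u. u \<in> Al \<Longrightarrow> count_list W u = 2"
  shows "is_nanoword (Al, p, W)"
  using assms unfolding is_nanoword_def gauss_word_def by auto

lemma L1:
  assumes inf: "infinite (UNIV :: 'l set)"
    and invol: "\<And>u. \<tau> (\<tau> u) = u"
    and nw: "is_nanoword (Al, p, x @ [a, b] @ y @ [c, a] @ z @ [b, c] @ t)"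
    and d: "a \<noteq> b" "a \<noteq> c" "b \<noteq> c"
    and S: "(p a, \<tau> (p b), p c) \<in> S"
  shows "nano_homotopic S \<tau> (Al, p, x @ [a, b] @ y @ [c, a] @ z @ [b, c] @ t)
                               (Al, p, x @ [b, a] @ y @ [a, c] @ z @ [c, b] @ (t::'l list))"
proof -
  from nw have fin: "finite Al" and sw: "set (x @ [a, b] @ y @ [c, a] @ z @ [b, c] @ t) \<subseteq> Al"
    and cnt: "\<And>u. u \<in> Al \<Longrightarrow> count_list (x @ [a, b] @ y @ [c, a] @ z @ [b, c] @ t) u = 2"
    unfolding is_nanoword_def gauss_word_def by auto
  have abc: "a \<in> Al" "b \<in> Al" "c \<in> Al" using sw by auto
  have K: "\<And>u. count_list x u + count_list y u + count_list z u + count_list t u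
      = (if u \<in> Al - {a,b,c} then 2 else 0)"
  proof -
    fix u
    show "count_list x u + count_list y u + count_list z u + count_list t u
      = (if u \<in> Al - {a,b,c} then 2 else 0)"
    proof (cases "u \<in> Al")
      case True then show ?thesis using cnt[of u] d by (auto simp: count_list_append)
    next
      case False
      then have "u \<notin> set x" "u \<notin> set y" "u \<notin> set z" "u \<notin> set t" using sw by auto
      then show ?thesis using False by (simp add: count_notin)
    qed
  qed
  have sx: "set x \<subseteq> Al - {a,b,c}" "set y \<subseteq> Al - {a,b,c}" "set z \<subseteq> Al - {a,b,c}" "set t \<subseteq> Al - {a,b,c}"
    using sw K[of a] K[of b] K[of c] by (auto simp: count_list_0_iff)
  obtain D where D: "D \<notin> Al" using ex_new_if_finite[OF inf fin] by auto
  obtain E where E: "E \<notin> insert D Al" using ex_new_if_finite[OF inf] fin by blast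
  define p' where "p' = p(D := p b, E := \<tau> (p b))"
  have p'Al: "\<forall>u\<in>Al. p' u = p u" using D E unfolding p'_def by auto
  have p'DE: "p' D = p b" "p' E = \<tau> (p b)" using E unfolding p'_def by auto
  have K': "\<And>u. u \<in> set x \<or> u \<in> set y \<or> u \<in> set z \<or> u \<in> set t \<Longrightarrow> u \<in> Al - {a,b,c}"
    using sx by auto
  let ?W0 = "x @ [a, b] @ y @ [c, a] @ z @ [b, c] @ t"
  have s1: "nano_homotopic S \<tau> (Al, p, ?W0) (Al, p', ?W0)"
    by (rule hom_iso, rule iso_proj[OF nw p'Al])
  let ?Y1 = "a # b # y @ [c, a] @ z @ [b, c]"
  have n1: "is_nanoword (insert D (insert E Al), p', x @ [D, E] @ ?Y1 @ [E, D] @ t)"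
  proof (rule nw_intro)
    show "finite (insert D (insert E Al))" using fin by simp
    show "set (x @ [D, E] @ ?Y1 @ [E, D] @ t) \<subseteq> insert D (insert E Al)" using sx abc by auto
    fix u assume "u \<in> insert D (insert E Al)"
    then show "count_list (x @ [D, E] @ ?Y1 @ [E, D] @ t) u = 2"
      using K[of u] D E abc d by (auto simp: count_list_append split: if_splits)
  qed
  have s2: "nano_homotopic S \<tau> (Al, p', ?W0) (insert D (insert E Al), p', x @ [D, E] @ ?Y1 @ [E, D] @ t)"
  proof -
    have "nano_move S \<tau> (insert D (insert E Al), p', x @ [D, E] @ ?Y1 @ [E, D] @ t)
       (insert D (insert E Al) - {D, E}, p', x @ ?Y1 @ t)"
      by (rule move2[OF n1]) (simp add: p'DE invol)
    moreover have "insert D (insert E Al) - {D, E} = Al" using D E by auto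
    ultimately show ?thesis by (auto intro: hom_move_inv)
  qed
  let ?W2 = "(x @ [D]) @ [a, E] @ (b # y) @ [a, c] @ (z @ [b]) @ [E, c] @ (D # t)"
  have n2: "is_nanoword (insert D (insert E Al), p', ?W2)"
  proof (rule nw_intro)
    show "finite (insert D (insert E Al))" using fin by simp
    show "set ?W2 \<subseteq> insert D (insert E Al)" using sx abc by auto
    fix u assume "u \<in> insert D (insert E Al)"
    then show "count_list ?W2 u = 2"
      using K[of u] D E abc d by (auto simp: count_list_append split: if_splits)
  qed
  have s3: "nano_homotopic S \<tau> (insert D (insert E Al), p', x @ [D, E] @ ?Y1 @ [E, D] @ t)
       (insert D (insert E Al), p', ?W2)"
  proof -
    have "nano_move S \<tau> (insert D (insert E Al), p', ?W2)
       (insert D (insert E Al), p', (x @ [D]) @ [E, a] @ (b # y) @ [c, a] @ (z @ [b]) @ [c, E] @ (D # t))"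
      by (rule move3[OF n2]) (use d E abc S in \<open>auto simp: p'DE p'Al\<close>)
    then show ?thesis by (auto intro: hom_move_inv)
  qed
  let ?W3 = "(x @ [D, a]) @ (y @ [a, c] @ z) @ (c # D # t)"
  have n3: "is_nanoword (insert D (Al - {b}), p', ?W3)"
  proof (rule nw_intro)
    show "finite (insert D (Al - {b}))" using fin by simp
    show "set ?W3 \<subseteq> insert D (Al - {b})" using sx abc d by auto
    fix u assume "u \<in> insert D (Al - {b})"
    then show "count_list ?W3 u = 2"
      using K[of u] D E abc d by (auto simp: count_list_append split: if_splits)
  qed
  have s4: "nano_homotopic S \<tau> (insert D (insert E Al), p', ?W2) (insert D (Al - {b}), p', ?W3)"
  proof -
    have "nano_move S \<tau> (insert D (insert E Al), p', (x @ [D, a]) @ [E, b] @ (y @ [a, c] @ z) @ [b, E] @ (c # D # t))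
       (insert D (insert E Al) - {E, b}, p', ?W3)"
      by (rule move2) (use n2 p'Al abc in \<open>auto simp: p'DE invol\<close>)
    moreover have "insert D (insert E Al) - {E, b} = insert D (Al - {b})" using D E abc d by auto
    ultimately show ?thesis by (auto intro: hom_move)
  qed
  let ?T = "x @ [b, a] @ y @ [a, c] @ z @ [c, b] @ t"
  have nT: "is_nanoword (Al, p, ?T)"
  proof (rule nw_intro)
    show "finite Al" using fin by simp
    show "set ?T \<subseteq> Al" using sx abc by auto
    fix u assume "u \<in> Al"
    then show "count_list ?T u = 2"
      using K[of u] abc d by (auto simp: count_list_append split: if_splits)
  qed
  have s5: "nano_homotopic S \<tau> (insert D (Al - {b}), p', ?W3) (Al, p, ?T)"
  proof (rule hom_iso, rule iso_rename[OF n3 nT D abc(2) refl])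
    show "\<forall>u\<in>Al - {b}. p' u = p u" using p'Al by auto
    show "p' D = p b" by (rule p'DE)
    have "map (\<lambda>u. if u = D then b else u) w = w" if "set w \<subseteq> Al - {a,b,c}" for w
      using that D by (intro map_idI) auto
    then show "map (\<lambda>u. if u = D then b else u) ?W3 = ?T" using sx d D abc by auto
  qed
  show ?thesis
    by (rule hom_trans[OF s1 hom_trans[OF s2 hom_trans[OF s3 hom_trans[OF s4 s5]]]])
qed

theorem lemma3p1:
  fixes S :: "('a \<times> 'a \<times> 'a) set" and \<tau> :: "'a \<Rightarrow> 'a"
    and Al :: "'l set" and p :: "'l \<Rightarrow> 'a"
    and A B C :: 'l and x y z t :: "'l list"
  assumes infinite_letters: "infinite (UNIV :: 'l set)"
    and invol: "\<And>u. \<tau> (\<tau> u) = u"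
    and fin: "finite Al"
    and letters: "A \<in> Al" "B \<in> Al" "C \<in> Al"
    and distinct: "A \<noteq> B" "A \<noteq> C" "B \<noteq> C"
    and words: "set x \<subseteq> Al - {A, B, C}" "set y \<subseteq> Al - {A, B, C}"
               "set z \<subseteq> Al - {A, B, C}" "set t \<subseteq> Al - {A, B, C}"
    and gauss: "gauss_word (Al - {A, B, C}) (x @ y @ z @ t)"
  shows "((p A, \<tau> (p B), p C) \<in> S \<longrightarrow>
           nano_homotopic S \<tau> (Al, p, x @ [A, B] @ y @ [C, A] @ z @ [B, C] @ t)
                               (Al, p, x @ [B, A] @ y @ [A, C] @ z @ [C, B] @ t))
       \<and> ((\<tau> (p A), \<tau> (p B), p C) \<in> S \<longrightarrow>
           nano_homotopic S \<tau> (Al, p, x @ [A, B] @ y @ [C, A] @ z @ [C, B] @ t)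
                               (Al, p, x @ [B, A] @ y @ [A, C] @ z @ [B, C] @ t))
       \<and> ((p A, \<tau> (p B), \<tau> (p C)) \<in> S \<longrightarrow>
           nano_homotopic S \<tau> (Al, p, x @ [A, B] @ y @ [A, C] @ z @ [C, B] @ t)
                               (Al, p, x @ [B, A] @ y @ [C, A] @ z @ [B, C] @ t))"
proof -
  have sx: "set x \<subseteq> Al - {A,B,C}" "set y \<subseteq> Al - {A,B,C}" "set z \<subseteq> Al - {A,B,C}" "set t \<subseteq> Al - {A,B,C}"
    using words by auto
  have K: "\<And>u. count_list x u + count_list y u + count_list z u + count_list t u
      = (if u \<in> Al - {A,B,C} then 2 else 0)"
  proof -
    fix u
    show "count_list x u + count_list y u + count_list z u + count_list t u
      = (if u \<in> Al - {A,B,C} then 2 else 0)"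
    proof (cases "u \<in> Al - {A,B,C}")
      case True then show ?thesis using gauss unfolding gauss_word_def by (auto simp: count_list_append add.assoc)
    next
      case False
      then have "u \<notin> set x" "u \<notin> set y" "u \<notin> set z" "u \<notin> set t" using sx by auto
      then show ?thesis using False by (simp add: count_notin)
    qed
  qed
  note abc = letters
  note d = distinct
  obtain D where D: "D \<notin> Al" using ex_new_if_finite[OF infinite_letters fin] by auto
  obtain E where E: "E \<notin> insert D Al" using ex_new_if_finite[OF infinite_letters] fin by blast
  have part1: "(p A, \<tau> (p B), p C) \<in> S \<longrightarrow>
           nano_homotopic S \<tau> (Al, p, x @ [A, B] @ y @ [C, A] @ z @ [B, C] @ t)
                               (Al, p, x @ [B, A] @ y @ [A, C] @ z @ [C, B] @ t)"
  proof
    assume S: "(p A, \<tau> (p B), p C) \<in> S"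
  have n0: "is_nanoword (Al, p, x @ [A, B] @ y @ [C, A] @ z @ [B, C] @ t)"
  proof (rule nw_intro)
    show "finite (Al)" using fin by simp
    show "set (x @ [A, B] @ y @ [C, A] @ z @ [B, C] @ t) \<subseteq> Al" using sx abc d D E by auto
    fix u assume "u \<in> Al"
    then show "count_list (x @ [A, B] @ y @ [C, A] @ z @ [B, C] @ t) u = 2"
      using K[of u] D E abc d by (auto simp: count_list_append split: if_splits)
  qed
    show "nano_homotopic S \<tau> (Al, p, x @ [A, B] @ y @ [C, A] @ z @ [B, C] @ t)
                               (Al, p, x @ [B, A] @ y @ [A, C] @ z @ [C, B] @ t)"
      by (rule L1[OF infinite_letters invol n0 d S])
  qed
  have part2: "(\<tau> (p A), \<tau> (p B), p C) \<in> S \<longrightarrow>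
           nano_homotopic S \<tau> (Al, p, x @ [A, B] @ y @ [C, A] @ z @ [C, B] @ t)
                               (Al, p, x @ [B, A] @ y @ [A, C] @ z @ [B, C] @ t)"
  proof
    assume S: "(\<tau> (p A), \<tau> (p B), p C) \<in> S"
    define p' where "p' = p(D := \<tau> (p A), E := p A)"
    have p'Al: "\<forall>u\<in>Al. p' u = p u" using D E unfolding p'_def by auto
    have p'DE: "p' D = \<tau> (p A)" "p' E = p A" using E unfolding p'_def by auto
    let ?W0 = "x @ [A, B] @ y @ [C, A] @ z @ [C, B] @ t"
  have n0: "is_nanoword (Al, p, ?W0)"
  proof (rule nw_intro)
    show "finite (Al)" using fin by simp
    show "set (?W0) \<subseteq> Al" using sx abc d D E by auto
    fix u assume "u \<in> Al"
    then show "count_list (?W0) u = 2"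
      using K[of u] D E abc d by (auto simp: count_list_append split: if_splits)
  qed
    have s1: "nano_homotopic S \<tau> (Al, p, ?W0) (Al, p', ?W0)"
      by (rule hom_iso, rule iso_proj[OF n0 p'Al])
    let ?W1 = "(x @ [A, B]) @ [D, E] @ y @ [E, D] @ (C # A # z @ [C, B] @ t)"
  have n1: "is_nanoword (insert D (insert E Al), p', ?W1)"
  proof (rule nw_intro)
    show "finite (insert D (insert E Al))" using fin by simp
    show "set (?W1) \<subseteq> insert D (insert E Al)" using sx abc d D E by auto
    fix u assume "u \<in> insert D (insert E Al)"
    then show "count_list (?W1) u = 2"
      using K[of u] D E abc d by (auto simp: count_list_append split: if_splits)
  qed
    have s2: "nano_homotopic S \<tau> (Al, p', ?W0) (insert D (insert E Al), p', ?W1)"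
    proof -
      have "nano_move S \<tau> (insert D (insert E Al), p', ?W1)
         (insert D (insert E Al) - {D, E}, p', (x @ [A, B]) @ y @ (C # A # z @ [C, B] @ t))"
        by (rule move2[OF n1]) (simp add: p'DE invol)
      moreover have "insert D (insert E Al) - {D, E} = Al" using D E by auto
      ultimately show ?thesis by (auto intro: hom_move_inv)
    qed
    let ?W2 = "(x @ [A]) @ [D, B] @ (E # y @ [E]) @ [C, D] @ (A # z) @ [B, C] @ t"
  have n2: "is_nanoword (insert D (insert E Al), p', ?W2)"
  proof (rule nw_intro)
    show "finite (insert D (insert E Al))" using fin by simp
    show "set (?W2) \<subseteq> insert D (insert E Al)" using sx abc d D E by auto
    fix u assume "u \<in> insert D (insert E Al)"
    then show "count_list (?W2) u = 2"
      using K[of u] D E abc d by (auto simp: count_list_append split: if_splits)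
  qed
    have s3: "nano_homotopic S \<tau> (insert D (insert E Al), p', ?W1) (insert D (insert E Al), p', ?W2)"
    proof -
      have "nano_homotopic S \<tau> (insert D (insert E Al), p', ?W2)
        (insert D (insert E Al), p', (x @ [A]) @ [B, D] @ (E # y @ [E]) @ [D, C] @ (A # z) @ [C, B] @ t)"
        by (rule L1[OF infinite_letters invol n2]) (use D E abc d S in \<open>auto simp: p'DE p'Al\<close>)
      then show ?thesis by (auto intro: hom_sym)
    qed
    let ?W3 = "x @ (B # E # y @ [E, C]) @ z @ [B, C] @ t"
  have n3: "is_nanoword (insert E (Al - {A}), p', ?W3)"
  proof (rule nw_intro)
    show "finite (insert E (Al - {A}))" using fin by simp
    show "set (?W3) \<subseteq> insert E (Al - {A})" using sx abc d D E by auto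
    fix u assume "u \<in> insert E (Al - {A})"
    then show "count_list (?W3) u = 2"
      using K[of u] D E abc d by (auto simp: count_list_append split: if_splits)
  qed
    have s4: "nano_homotopic S \<tau> (insert D (insert E Al), p', ?W2) (insert E (Al - {A}), p', ?W3)"
    proof -
      have "nano_move S \<tau> (insert D (insert E Al), p', x @ [A, D] @ (B # E # y @ [E, C]) @ [D, A] @ z @ [B, C] @ t)
         (insert D (insert E Al) - {A, D}, p', ?W3)"
        by (rule move2) (use n2 p'Al abc in \<open>auto simp: p'DE invol\<close>)
      moreover have "insert D (insert E Al) - {A, D} = insert E (Al - {A})" using D E abc d by auto
      ultimately show ?thesis by (auto intro: hom_move)
    qed
    let ?T = "x @ [B, A] @ y @ [A, C] @ z @ [B, C] @ t"
  have nT: "is_nanoword (Al, p, ?T)"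
  proof (rule nw_intro)
    show "finite (Al)" using fin by simp
    show "set (?T) \<subseteq> Al" using sx abc d D E by auto
    fix u assume "u \<in> Al"
    then show "count_list (?T) u = 2"
      using K[of u] D E abc d by (auto simp: count_list_append split: if_splits)
  qed
    have s5: "nano_homotopic S \<tau> (insert E (Al - {A}), p', ?W3) (Al, p, ?T)"
    proof (rule hom_iso, rule iso_rename[OF n3 nT _ abc(1) refl])
      show "E \<notin> Al" using E by auto
      show "\<forall>u\<in>Al - {A}. p' u = p u" using p'Al by auto
      show "p' E = p A" by (rule p'DE)
      have "map (\<lambda>u. if u = E then A else u) w = w" if "set w \<subseteq> Al - {A,B,C}" for w
        using that E by (intro map_idI) auto
      then show "map (\<lambda>u. if u = E then A else u) ?W3 = ?T" using sx d E abc by auto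
    qed
    show "nano_homotopic S \<tau> (Al, p, ?W0) (Al, p, ?T)"
      by (rule hom_trans[OF s1 hom_trans[OF s2 hom_trans[OF s3 hom_trans[OF s4 s5]]]])
  qed
  have part3: "(p A, \<tau> (p B), \<tau> (p C)) \<in> S \<longrightarrow>
           nano_homotopic S \<tau> (Al, p, x @ [A, B] @ y @ [A, C] @ z @ [C, B] @ t)
                               (Al, p, x @ [B, A] @ y @ [C, A] @ z @ [B, C] @ t)"
  proof
    assume S: "(p A, \<tau> (p B), \<tau> (p C)) \<in> S"
    define p' where "p' = p(D := p C, E := \<tau> (p C))"
    have p'Al: "\<forall>u\<in>Al. p' u = p u" using D E unfolding p'_def by auto
    have p'DE: "p' D = p C" "p' E = \<tau> (p C)" using E unfolding p'_def by auto
    let ?W0 = "x @ [A, B] @ y @ [A, C] @ z @ [C, B] @ t"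
  have n0: "is_nanoword (Al, p, ?W0)"
  proof (rule nw_intro)
    show "finite (Al)" using fin by simp
    show "set (?W0) \<subseteq> Al" using sx abc d D E by auto
    fix u assume "u \<in> Al"
    then show "count_list (?W0) u = 2"
      using K[of u] D E abc d by (auto simp: count_list_append split: if_splits)
  qed
    have s1: "nano_homotopic S \<tau> (Al, p, ?W0) (Al, p', ?W0)"
      by (rule hom_iso, rule iso_proj[OF n0 p'Al])
    let ?W1 = "(x @ [A, B] @ y) @ [D, E] @ (A # C # z @ [C, B]) @ [E, D] @ t"
  have n1: "is_nanoword (insert D (insert E Al), p', ?W1)"
  proof (rule nw_intro)
    show "finite (insert D (insert E Al))" using fin by simp
    show "set (?W1) \<subseteq> insert D (insert E Al)" using sx abc d D E by auto
    fix u assume "u \<in> insert D (insert E Al)"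
    then show "count_list (?W1) u = 2"
      using K[of u] D E abc d by (auto simp: count_list_append split: if_splits)
  qed
    have s2: "nano_homotopic S \<tau> (Al, p', ?W0) (insert D (insert E Al), p', ?W1)"
    proof -
      have "nano_move S \<tau> (insert D (insert E Al), p', ?W1)
         (insert D (insert E Al) - {D, E}, p', (x @ [A, B] @ y) @ (A # C # z @ [C, B]) @ t)"
        by (rule move2[OF n1]) (simp add: p'DE invol)
      moreover have "insert D (insert E Al) - {D, E} = Al" using D E by auto
      ultimately show ?thesis by (auto intro: hom_move_inv)
    qed
    let ?W2 = "x @ [B, A] @ (y @ [D]) @ [A, E] @ (C # z @ [C]) @ [E, B] @ (D # t)"
  have n2: "is_nanoword (insert D (insert E Al), p', ?W2)"
  proof (rule nw_intro)
    show "finite (insert D (insert E Al))" using fin by simp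
    show "set (?W2) \<subseteq> insert D (insert E Al)" using sx abc d D E by auto
    fix u assume "u \<in> insert D (insert E Al)"
    then show "count_list (?W2) u = 2"
      using K[of u] D E abc d by (auto simp: count_list_append split: if_splits)
  qed
  have n1': "is_nanoword (insert D (insert E Al), p', x @ [A, B] @ (y @ [D]) @ [E, A] @ (C # z @ [C]) @ [B, E] @ (D # t))"
  proof (rule nw_intro)
    show "finite (insert D (insert E Al))" using fin by simp
    show "set (x @ [A, B] @ (y @ [D]) @ [E, A] @ (C # z @ [C]) @ [B, E] @ (D # t)) \<subseteq> insert D (insert E Al)" using sx abc d D E by auto
    fix u assume "u \<in> insert D (insert E Al)"
    then show "count_list (x @ [A, B] @ (y @ [D]) @ [E, A] @ (C # z @ [C]) @ [B, E] @ (D # t)) u = 2"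
      using K[of u] D E abc d by (auto simp: count_list_append split: if_splits)
  qed
    have s3: "nano_homotopic S \<tau> (insert D (insert E Al), p', ?W1) (insert D (insert E Al), p', ?W2)"
    proof -
      have "nano_homotopic S \<tau> (insert D (insert E Al), p', x @ [A, B] @ (y @ [D]) @ [E, A] @ (C # z @ [C]) @ [B, E] @ (D # t))
        (insert D (insert E Al), p', ?W2)"
        by (rule L1[OF infinite_letters invol n1']) (use D E abc d S in \<open>auto simp: p'DE p'Al\<close>)
      then show ?thesis by simp
    qed
    let ?W3 = "(x @ [B, A] @ y @ [D, A]) @ z @ (B # D # t)"
  have n3: "is_nanoword (insert D (Al - {C}), p', ?W3)"
  proof (rule nw_intro)
    show "finite (insert D (Al - {C}))" using fin by simp
    show "set (?W3) \<subseteq> insert D (Al - {C})" using sx abc d D E by auto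
    fix u assume "u \<in> insert D (Al - {C})"
    then show "count_list (?W3) u = 2"
      using K[of u] D E abc d by (auto simp: count_list_append split: if_splits)
  qed
    have s4: "nano_homotopic S \<tau> (insert D (insert E Al), p', ?W2) (insert D (Al - {C}), p', ?W3)"
    proof -
      have "nano_move S \<tau> (insert D (insert E Al), p', (x @ [B, A] @ y @ [D, A]) @ [E, C] @ z @ [C, E] @ (B # D # t))
         (insert D (insert E Al) - {E, C}, p', ?W3)"
        by (rule move2) (use n2 p'Al abc in \<open>auto simp: p'DE invol\<close>)
      moreover have "insert D (insert E Al) - {E, C} = insert D (Al - {C})" using D E abc d by auto
      ultimately show ?thesis by (auto intro: hom_move)
    qed
    let ?T = "x @ [B, A] @ y @ [C, A] @ z @ [B, C] @ t"
  have nT: "is_nanoword (Al, p, ?T)"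
  proof (rule nw_intro)
    show "finite (Al)" using fin by simp
    show "set (?T) \<subseteq> Al" using sx abc d D E by auto
    fix u assume "u \<in> Al"
    then show "count_list (?T) u = 2"
      using K[of u] D E abc d by (auto simp: count_list_append split: if_splits)
  qed
    have s5: "nano_homotopic S \<tau> (insert D (Al - {C}), p', ?W3) (Al, p, ?T)"
    proof (rule hom_iso, rule iso_rename[OF n3 nT D abc(3) refl])
      show "\<forall>u\<in>Al - {C}. p' u = p u" using p'Al by auto
      show "p' D = p C" by (rule p'DE)
      have "map (\<lambda>u. if u = D then C else u) w = w" if "set w \<subseteq> Al - {A,B,C}" for w
        using that D by (intro map_idI) auto
      then show "map (\<lambda>u. if u = D then C else u) ?W3 = ?T" using sx d D abc by auto
    qed
    show "nano_homotopic S \<tau> (Al, p, ?W0) (Al, p, ?T)"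
      by (rule hom_trans[OF s1 hom_trans[OF s2 hom_trans[OF s3 hom_trans[OF s4 s5]]]])
  qed
  show ?thesis using part1 part2 part3 by blast
qed

end
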